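(* Let $W\in[0,1]^{k\times k}$ be a symmetric positive semidefinite matrix with unit diagonal, let $\mu>0$, and consider the collaborative learning problem with strategy space $\mathbb{R}_+^k$, utilities $u_i({\boldsymbol\theta})=W_i^\top{\boldsymbol\theta}$ ($W_i$ the $i$-th column of $W$) and thresholds $\mu_i=\mu$ for all $i\in[k]$. Let ${\boldsymbol\theta}^{\mathrm{eq}}$ be an optimal stable equilibrium, let $I=\{i:\theta^{\mathrm{eq}}_i=0\}$, and let $\bar W$ and $\bar{\boldsymbol\theta}^{\mathrm{eq}}$ be the restrictions of $W$ (rows and columns) and ${\boldsymbol\theta}^{\mathrm{eq}}$ to the index set $[k]\setminus I$. Then $\bar{\boldsymbol\theta}^{\mathrm{eq}}$ is a socially optimal solution for the agents in $[k]\setminus I$ with utilities $u_i(\bar{\boldsymbol\theta})=\bar W_i^\top\bar{\boldsymbol\theta}$ and threshold $\mu$, i.e. it is an optimal solution of $\min\{\mathbf{1}^\top{\bf x}:\bar W{\bf x}\ge\mu\mathbf{1},\ {\bf x}\ge\mathbf{0}\}$. Furthermore, for any socially optimal solution $\bar{\boldsymbol\theta}$ for the agents $[k]\setminus I$, its extension $\tilde{\boldsymbol\theta}\in\mathbb{R}_+^k$ defined by $\tilde\theta_i=0$ for $i\in I$ and $\tilde\theta_i=\bar\theta_i$ otherwise is an optimal stable equilibrium for the agents $[k]$.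
   Context: ${\boldsymbol\theta}$ is feasible if $u_i({\boldsymbol\theta})\ge\mu_i$ for all $i$. A feasible ${\boldsymbol\theta}\in\mathbb{R}_+^k$ is a stable equilibrium if for no $i$ is there $0\le\theta_i'<\theta_i$ with $u_i(\theta_i',{\boldsymbol\theta}_{-i})\ge\mu_i$ (${\boldsymbol\theta}$ with $i$-th entry replaced by $\theta_i'$). An optimal stable equilibrium is a stable equilibrium minimizing $\mathbf{1}^\top{\boldsymbol\theta}$. A socially optimal solution minimizes $\mathbf{1}^\top{\boldsymbol\theta}$ over all feasible ${\boldsymbol\theta}\ge\mathbf{0}$. *)

theory Defs
  imports Complex_Main
begin

text \<open>A strategy profile is a
  function theta :: nat => real, nonnegative on A and zero outside A (so profiles
  are exactly the elements of R_+^A).\<close>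

definition strategies :: "nat set \<Rightarrow> (nat \<Rightarrow> real) set" where
  "strategies A = {\<theta>. (\<forall>i\<in>A. 0 \<le> \<theta> i) \<and> (\<forall>i. i \<notin> A \<longrightarrow> \<theta> i = 0)}"

definition util :: "nat set \<Rightarrow> (nat \<Rightarrow> nat \<Rightarrow> real) \<Rightarrow> (nat \<Rightarrow> real) \<Rightarrow> nat \<Rightarrow> real" where
  "util A W \<theta> i = (\<Sum>j\<in>A. W j i * \<theta> j)"

definition feasible :: "nat set \<Rightarrow> (nat \<Rightarrow> nat \<Rightarrow> real) \<Rightarrow> real \<Rightarrow> (nat \<Rightarrow> real) \<Rightarrow> bool" where
  "feasible A W \<mu> \<theta> \<longleftrightarrow> \<theta> \<in> strategies A \<and> (\<forall>i\<in>A. util A W \<theta> i \<ge> \<mu>)"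

definition stable_eq :: "nat set \<Rightarrow> (nat \<Rightarrow> nat \<Rightarrow> real) \<Rightarrow> real \<Rightarrow> (nat \<Rightarrow> real) \<Rightarrow> bool" where
  "stable_eq A W \<mu> \<theta> \<longleftrightarrow> feasible A W \<mu> \<theta> \<and>
     (\<forall>i\<in>A. \<not> (\<exists>t. 0 \<le> t \<and> t < \<theta> i \<and> util A W (\<theta>(i := t)) i \<ge> \<mu>))"

definition optimal_stable_eq :: "nat set \<Rightarrow> (nat \<Rightarrow> nat \<Rightarrow> real) \<Rightarrow> real \<Rightarrow> (nat \<Rightarrow> real) \<Rightarrow> bool" where
  "optimal_stable_eq A W \<mu> \<theta> \<longleftrightarrow> stable_eq A W \<mu> \<theta> \<and>
     (\<forall>\<theta>'. stable_eq A W \<mu> \<theta>' \<longrightarrow> sum \<theta> A \<le> sum \<theta>' A)"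

definition socially_optimal :: "nat set \<Rightarrow> (nat \<Rightarrow> nat \<Rightarrow> real) \<Rightarrow> real \<Rightarrow> (nat \<Rightarrow> real) \<Rightarrow> bool" where
  "socially_optimal A W \<mu> \<theta> \<longleftrightarrow> feasible A W \<mu> \<theta> \<and>
     (\<forall>\<theta>'. feasible A W \<mu> \<theta>' \<longrightarrow> sum \<theta> A \<le> sum \<theta>' A)"

definition psd_on :: "nat set \<Rightarrow> (nat \<Rightarrow> nat \<Rightarrow> real) \<Rightarrow> bool" where
  "psd_on K W \<longleftrightarrow> (\<forall>x :: nat \<Rightarrow> real. 0 \<le> (\<Sum>i\<in>K. \<Sum>j\<in>K. x i * W i j * x j))"

end

theory Submission
  imports Defs
begin

lemma util_upd:
  assumes "finite A" "i \<in> A"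
  shows "util A W (\<theta>(i := t)) i = util A W \<theta> i + W i i * (t - \<theta> i)"
proof -
  have "util A W (\<theta>(i := t)) i = W i i * t + (\<Sum>j\<in>A-{i}. W j i * (\<theta>(i := t)) j)"
    unfolding util_def using sum.remove[OF assms, of "\<lambda>j. W j i * (\<theta>(i := t)) j"] by simp
  also have "(\<Sum>j\<in>A-{i}. W j i * (\<theta>(i := t)) j) = (\<Sum>j\<in>A-{i}. W j i * \<theta> j)"
    by (rule sum.cong) auto
  also have "util A W \<theta> i = W i i * \<theta> i + (\<Sum>j\<in>A-{i}. W j i * \<theta> j)"
    unfolding util_def using sum.remove[OF assms, of "\<lambda>j. W j i * \<theta> j"] by simp
  ultimately show ?thesis by (simp add: algebra_simps fun_upd_def)
qed

lemma stable_tight: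
  assumes "finite A" "stable_eq A W \<mu> \<theta>" "i \<in> A" "\<theta> i > 0" "W i i = 1"
  shows "util A W \<theta> i = \<mu>"
proof (rule ccontr)
  assume ne: "util A W \<theta> i \<noteq> \<mu>"
  have ge: "util A W \<theta> i \<ge> \<mu>" using assms(2,3) unfolding stable_eq_def feasible_def by auto
  define t where "t = max 0 (\<theta> i - (util A W \<theta> i - \<mu>))"
  have "0 \<le> t" "t < \<theta> i" using ne ge assms(4) unfolding t_def by auto
  moreover have "util A W (\<theta>(i := t)) i \<ge> \<mu>"
    using util_upd[OF assms(1,3)] assms(5) unfolding t_def by auto
  ultimately show False using assms(2,3) unfolding stable_eq_def by blast
qed

lemma tight_stable:
  assumes "finite A" "feasible A W \<mu> \<theta>" "\<forall>i\<in>A. \<theta> i > 0 \<longrightarrow> util A W \<theta> i = \<mu>"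
    "\<forall>i\<in>A. W i i = 1"
  shows "stable_eq A W \<mu> \<theta>"
  unfolding stable_eq_def
proof (intro conjI ballI notI)
  show "feasible A W \<mu> \<theta>" by fact
  fix i assume iA: "i \<in> A" and ex: "\<exists>t\<ge>0. t < \<theta> i \<and> \<mu> \<le> util A W (\<theta>(i := t)) i"
  then obtain t where t: "0 \<le> t" "t < \<theta> i" "\<mu> \<le> util A W (\<theta>(i := t)) i" by blast
  then have "util A W \<theta> i = \<mu>" using assms(3) iA by auto
  then show False using t util_upd[OF assms(1) iA] assms(4) iA by auto
qed

lemma psd_zero:
  assumes fin: "finite K" and i0: "i0 \<in> K"
    and psd: "\<forall>x :: nat \<Rightarrow> real. 0 \<le> (\<Sum>i\<in>K. \<Sum>j\<in>K. x i * W i j * x j)"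
    and sym: "\<forall>i\<in>K. \<forall>j\<in>K. W i j = W j i"
    and diag: "W i0 i0 = 1"
    and q0: "(\<Sum>i\<in>K. \<Sum>j\<in>K. d i * W i j * d j) = 0"
  shows "(\<Sum>j\<in>K. W i0 j * d j) = 0"
proof -
  define a where "a = (\<Sum>j\<in>K. W i0 j * d j)"
  define e where "e = (\<lambda>j::nat. if j = i0 then - a else 0)"
  define x where "x = (\<lambda>j. d j + e j)"
  have exp: "(\<Sum>i\<in>K. \<Sum>j\<in>K. x i * W i j * x j) =
     (\<Sum>i\<in>K. \<Sum>j\<in>K. d i * W i j * d j) + (\<Sum>i\<in>K. \<Sum>j\<in>K. d i * W i j * e j)
     + (\<Sum>i\<in>K. \<Sum>j\<in>K. e i * W i j * d j) + (\<Sum>i\<in>K. \<Sum>j\<in>K. e i * W i j * e j)"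
    unfolding x_def by (simp add: algebra_simps sum.distrib)
  have t2: "(\<Sum>i\<in>K. \<Sum>j\<in>K. d i * W i j * e j) = - a * a"
  proof -
    have "(\<Sum>i\<in>K. \<Sum>j\<in>K. d i * W i j * e j) = (\<Sum>i\<in>K. d i * W i i0 * (- a))"
      unfolding e_def using i0 fin by (simp add: if_distrib cong: if_cong)
    also have "\<dots> = - a * (\<Sum>i\<in>K. W i0 i * d i)"
      using sym i0 by (simp add: sum_distrib_left algebra_simps)
    finally show ?thesis unfolding a_def by simp
  qed
  have t3: "(\<Sum>i\<in>K. \<Sum>j\<in>K. e i * W i j * d j) = - a * a"
  proof -
    have "(\<Sum>i\<in>K. \<Sum>j\<in>K. e i * W i j * d j) = (\<Sum>j\<in>K. \<Sum>i\<in>K. e i * W i j * d j)"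
      by (rule sum.swap)
    also have "\<dots> = (\<Sum>j\<in>K. - a * W i0 j * d j)"
    proof (rule sum.cong[OF refl])
      fix j
      have "(\<Sum>i\<in>K. e i * W i j * d j) = (\<Sum>i\<in>K. if i = i0 then - a * W i0 j * d j else 0)"
        by (rule sum.cong) (auto simp: e_def)
      then show "(\<Sum>i\<in>K. e i * W i j * d j) = - a * W i0 j * d j" using i0 fin by simp
    qed
    also have "\<dots> = - a * (\<Sum>j\<in>K. W i0 j * d j)"
      by (simp add: sum_distrib_left mult.assoc)
    also have "\<dots> = - a * a" unfolding a_def ..
    finally show ?thesis .
  qed
  have t4: "(\<Sum>i\<in>K. \<Sum>j\<in>K. e i * W i j * e j) = a * a"
  proof -
    have "(\<Sum>i\<in>K. \<Sum>j\<in>K. e i * W i j * e j) = (\<Sum>i\<in>K. if i = i0 then a * a else 0)"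
    proof (rule sum.cong[OF refl])
      fix i
      have "(\<Sum>j\<in>K. e i * W i j * e j) = (\<Sum>j\<in>K. if j = i0 then e i * W i i0 * (- a) else 0)"
        by (rule sum.cong) (auto simp: e_def)
      also have "\<dots> = e i * W i i0 * (- a)" using i0 fin by simp
      also have "\<dots> = (if i = i0 then a * a else 0)" using diag by (simp add: e_def)
      finally show "(\<Sum>j\<in>K. e i * W i j * e j) = (if i = i0 then a * a else 0)" .
    qed
    also have "\<dots> = a * a" using i0 fin by simp
    finally show ?thesis .
  qed
  have "0 \<le> (\<Sum>i\<in>K. \<Sum>j\<in>K. x i * W i j * x j)" using psd by blast
  then have "0 \<le> - (a * a)" using exp t2 t3 t4 q0 by simp
  then have "a * a = 0" using zero_le_square[of a] by linarith
  then have "a = 0" by simp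
  then show ?thesis unfolding a_def .
qed


lemma util_restrict:
  assumes "finite K" "S \<subseteq> K" "\<forall>j\<in>K-S. \<theta> j = 0"
  shows "util K W \<theta> i = util S W \<theta> i"
  unfolding util_def by (rule sum.mono_neutral_right) (use assms in auto)

lemma dual_identity:
  assumes "\<forall>i\<in>S. \<forall>j\<in>S. W i j = W j i"
  shows "(\<Sum>i\<in>S. x i * util S W y i) = (\<Sum>j\<in>S. y j * util S W x j)"
proof -
  have "(\<Sum>i\<in>S. x i * util S W y i) = (\<Sum>i\<in>S. \<Sum>j\<in>S. x i * W j i * y j)"
    unfolding util_def by (simp add: sum_distrib_left mult.assoc)
  also have "\<dots> = (\<Sum>j\<in>S. \<Sum>i\<in>S. x i * W j i * y j)" by (rule sum.swap)
  also have "\<dots> = (\<Sum>j\<in>S. y j * util S W x j)"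
    unfolding util_def sum_distrib_left
    by (rule sum.cong[OF refl], rule sum.cong[OF refl]) (use assms in auto)
  finally show ?thesis .
qed

lemma weak_duality:
  assumes sym: "\<forall>i\<in>S. \<forall>j\<in>S. W i j = W j i" and mu: "\<mu> > 0"
    and fx: "feasible S W \<mu> x" and y0: "\<forall>j\<in>S. 0 \<le> y j"
    and yt: "\<forall>j\<in>S. util S W y j = \<mu>"
  shows "sum y S \<le> sum x S"
proof -
  have "\<mu> * sum x S = (\<Sum>i\<in>S. x i * util S W y i)"
    using yt by (simp add: sum_distrib_left mult.commute)
  also have "\<dots> = (\<Sum>j\<in>S. y j * util S W x j)" by (rule dual_identity[OF sym])
  also have "\<dots> \<ge> (\<Sum>j\<in>S. y j * \<mu>)"
    by (rule sum_mono) (use fx y0 in \<open>auto simp: feasible_def intro: mult_left_mono\<close>)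
  finally have "\<mu> * sum y S \<le> \<mu> * sum x S" by (simp add: sum_distrib_left mult.commute)
  then show ?thesis using mu by simp
qed

theorem theorem6:
  fixes k :: nat and W :: "nat \<Rightarrow> nat \<Rightarrow> real" and \<mu> :: real
    and \<theta>eq :: "nat \<Rightarrow> real" and I :: "nat set"
  assumes W_range: "\<forall>i<k. \<forall>j<k. 0 \<le> W i j \<and> W i j \<le> 1"
    and W_sym: "\<forall>i<k. \<forall>j<k. W i j = W j i"
    and W_psd: "psd_on {..<k} W"
    and W_diag: "\<forall>i<k. W i i = 1"
    and mu_pos: "\<mu> > 0"
    and eq: "optimal_stable_eq {..<k} W \<mu> \<theta>eq"
    and I_def: "I = {i\<in>{..<k}. \<theta>eq i = 0}"
  shows "socially_optimal ({..<k} - I) W \<mu> (\<lambda>i. if i \<in> {..<k} - I then \<theta>eq i else 0)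
         \<and> (\<forall>\<theta>bar. socially_optimal ({..<k} - I) W \<mu> \<theta>bar \<longrightarrow>
               optimal_stable_eq {..<k} W \<mu> (\<lambda>i. if i \<in> {..<k} - I then \<theta>bar i else 0))"
proof -
  define K where "K = {..<k}"
  define S where "S = K - I"
  have finK: "finite K" and finS: "finite S" and SK: "S \<subseteq> K" unfolding K_def S_def by auto
  have symK: "\<forall>i\<in>K. \<forall>j\<in>K. W i j = W j i" using W_sym unfolding K_def by auto
  have symS: "\<forall>i\<in>S. \<forall>j\<in>S. W i j = W j i" using symK SK by auto
  have diagK: "\<forall>i\<in>K. W i i = 1" using W_diag unfolding K_def by auto
  have stab: "stable_eq K W \<mu> \<theta>eq" and opt: "\<forall>\<theta>'. stable_eq K W \<mu> \<theta>' \<longrightarrow> sum \<theta>eq K \<le> sum \<theta>' K"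
    using eq unfolding optimal_stable_eq_def K_def by auto
  have feq: "feasible K W \<mu> \<theta>eq" using stab unfolding stable_eq_def by auto
  have eq_nn: "\<forall>i\<in>K. 0 \<le> \<theta>eq i" and eq_out: "\<forall>i. i \<notin> K \<longrightarrow> \<theta>eq i = 0"
    using feq unfolding feasible_def strategies_def by auto
  have eq_I: "\<forall>i\<in>K-S. \<theta>eq i = 0" unfolding S_def I_def K_def by auto
  have eq_outS: "\<forall>i. i \<notin> S \<longrightarrow> \<theta>eq i = 0" using eq_I eq_out by blast
  have eq_pos: "\<forall>i\<in>S. \<theta>eq i > 0" using eq_nn unfolding S_def I_def K_def
    by (auto simp: order.strict_iff_order)
  have eq_ext: "(\<lambda>i. if i \<in> S then \<theta>eq i else 0) = \<theta>eq" using eq_outS by auto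
  have eq_util: "\<forall>i. util K W \<theta>eq i = util S W \<theta>eq i"
    using util_restrict[OF finK SK eq_I] by blast
  have eq_tight: "\<forall>i\<in>S. util S W \<theta>eq i = \<mu>"
    using stable_tight[OF finK stab] SK eq_pos diagK eq_util by auto
  have feqS: "feasible S W \<mu> \<theta>eq"
    using feq eq_util SK eq_nn eq_outS unfolding feasible_def strategies_def by auto
  have optS: "\<forall>x. feasible S W \<mu> x \<longrightarrow> sum \<theta>eq S \<le> sum x S"
    using weak_duality[OF symS mu_pos _ _ eq_tight] eq_nn SK by auto
  have part1: "socially_optimal S W \<mu> \<theta>eq"
    using feqS optS unfolding socially_optimal_def by auto
  have sumeq: "sum \<theta>eq K = sum \<theta>eq S" by (rule sum.mono_neutral_left[symmetric]) (use finK SK eq_I in auto)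
  have part2: "optimal_stable_eq K W \<mu> \<theta>bar" if so: "socially_optimal S W \<mu> \<theta>bar" for \<theta>bar
  proof -
    have fb: "feasible S W \<mu> \<theta>bar" and ob: "sum \<theta>bar S \<le> sum \<theta>eq S"
      using so feqS unfolding socially_optimal_def by auto
    have b_nn: "\<forall>i\<in>S. 0 \<le> \<theta>bar i" and b_out: "\<forall>i. i \<notin> S \<longrightarrow> \<theta>bar i = 0"
      using fb unfolding feasible_def strategies_def by auto
    have b_ge: "\<forall>i\<in>S. util S W \<theta>bar i \<ge> \<mu>" using fb unfolding feasible_def by auto
    have sb: "sum \<theta>bar S = sum \<theta>eq S" using ob optS fb by (meson antisym)
    have "(\<Sum>j\<in>S. \<theta>eq j * (util S W \<theta>bar j - \<mu>)) =
          (\<Sum>j\<in>S. \<theta>eq j * util S W \<theta>bar j) - \<mu> * sum \<theta>eq S"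
      by (simp add: right_diff_distrib sum_subtractf sum_distrib_left mult.commute)
    also have "(\<Sum>j\<in>S. \<theta>eq j * util S W \<theta>bar j) = (\<Sum>i\<in>S. \<theta>bar i * util S W \<theta>eq i)"
      by (rule dual_identity[OF symS, symmetric])
    also have "\<dots> = \<mu> * sum \<theta>bar S"
      using eq_tight by (simp add: sum_distrib_left mult.commute)
    finally have z: "(\<Sum>j\<in>S. \<theta>eq j * (util S W \<theta>bar j - \<mu>)) = 0" using sb by simp
    have nn: "\<forall>j\<in>S. 0 \<le> \<theta>eq j * (util S W \<theta>bar j - \<mu>)"
      using eq_nn SK b_ge by auto
    have "\<forall>j\<in>S. \<theta>eq j * (util S W \<theta>bar j - \<mu>) = 0"
      using nn sum_nonneg_eq_0_iff[OF finS, of "\<lambda>j. \<theta>eq j * (util S W \<theta>bar j - \<mu>)"] z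
        eq_nn SK b_ge by auto
    then have b_tight: "\<forall>j\<in>S. util S W \<theta>bar j = \<mu>" using eq_pos by fastforce
    define d where "d = (\<lambda>i. \<theta>bar i - \<theta>eq i)"
    have d_out: "\<forall>i\<in>K-S. d i = 0" unfolding d_def using b_out eq_outS by auto
    have row: "(\<Sum>j\<in>K. W i j * d j) = util K W \<theta>bar i - util K W \<theta>eq i" if "i \<in> K" for i
      unfolding util_def d_def using symK that
      by (simp add: sum_subtractf[symmetric] right_diff_distrib)
    have b_util: "\<forall>i. util K W \<theta>bar i = util S W \<theta>bar i"
      using util_restrict[OF finK SK] b_out by auto
    have "(\<Sum>i\<in>K. \<Sum>j\<in>K. d i * W i j * d j) = (\<Sum>i\<in>K. d i * (\<Sum>j\<in>K. W i j * d j))"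
      by (simp add: sum_distrib_left mult.assoc)
    also have "\<dots> = 0"
    proof (rule sum.neutral, rule ballI)
      fix i assume iK: "i \<in> K"
      show "d i * (\<Sum>j\<in>K. W i j * d j) = 0"
      proof (cases "i \<in> S")
        case True
        then show ?thesis using row[OF iK] b_util eq_util b_tight eq_tight by simp
      next
        case False then show ?thesis using d_out iK by simp
      qed
    qed
    finally have q0: "(\<Sum>i\<in>K. \<Sum>j\<in>K. d i * W i j * d j) = 0" .
    have psd: "\<forall>x :: nat \<Rightarrow> real. 0 \<le> (\<Sum>i\<in>K. \<Sum>j\<in>K. x i * W i j * x j)"
      using W_psd unfolding psd_on_def K_def .
    have b_eq_util: "\<forall>i\<in>K. util K W \<theta>bar i = util K W \<theta>eq i"
    proof
      fix i assume iK: "i \<in> K"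
      have "(\<Sum>j\<in>K. W i j * d j) = 0"
        by (rule psd_zero[OF finK iK psd symK]) (use diagK iK q0 in auto)
      then show "util K W \<theta>bar i = util K W \<theta>eq i" using row[OF iK] by simp
    qed
    have fbK: "feasible K W \<mu> \<theta>bar"
      using b_eq_util feq b_nn b_out SK unfolding feasible_def strategies_def by auto
    have sbK: "stable_eq K W \<mu> \<theta>bar"
    proof (rule tight_stable[OF finK fbK _ diagK], intro ballI impI)
      fix i assume "i \<in> K" "0 < \<theta>bar i"
      then have "i \<in> S" using b_out by fastforce
      then show "util K W \<theta>bar i = \<mu>" using b_util b_tight by auto
    qed
    have sumb: "sum \<theta>bar K = sum \<theta>bar S" by (rule sum.mono_neutral_left[symmetric]) (use finK SK b_out in auto)
    show ?thesis unfolding optimal_stable_eq_def using sbK opt sumb sumeq sb by auto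
  qed
  have ext: "\<And>\<theta>bar. socially_optimal S W \<mu> \<theta>bar \<Longrightarrow> (\<lambda>i. if i \<in> S then \<theta>bar i else 0) = \<theta>bar"
    unfolding socially_optimal_def feasible_def strategies_def by auto
  show ?thesis
    using part1 part2 ext eq_ext unfolding S_def K_def by auto
qed

end
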